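(* For every integer $D\ge 2$, there exists a 2-degenerate graph $H_D$ with maximum degree $D$ such that $H_D^2$ is not $(3D-5)$-degenerate.
   Context: A graph is $k$-degenerate if every subgraph has a vertex of degree at most $k$. The square $H^2$ is obtained from $H$ by adding an edge between every pair of vertices at distance 2 in $H$. *)

theory Defs
  imports Main
begin

definition simple_graph :: "'a set \<Rightarrow> ('a \<Rightarrow> 'a \<Rightarrow> bool) \<Rightarrow> bool" where
  "simple_graph V E \<longleftrightarrow> finite V \<and>
     (\<forall>u v. E u v \<longrightarrow> u \<in> V \<and> v \<in> V \<and> u \<noteq> v) \<and>
     (\<forall>u v. E u v \<longrightarrow> E v u)"

definition degree :: "('a \<Rightarrow> 'a \<Rightarrow> bool) \<Rightarrow> 'a \<Rightarrow> nat" where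
  "degree E v = card {w. E v w}"

definition subgraph :: "'a set \<Rightarrow> ('a \<Rightarrow> 'a \<Rightarrow> bool) \<Rightarrow> 'a set \<Rightarrow> ('a \<Rightarrow> 'a \<Rightarrow> bool) \<Rightarrow> bool" where
  "subgraph S F V E \<longleftrightarrow> S \<subseteq> V \<and>
     (\<forall>u v. F u v \<longrightarrow> E u v \<and> u \<in> S \<and> v \<in> S) \<and>
     (\<forall>u v. F u v \<longrightarrow> F v u)"

definition degenerate :: "'a set \<Rightarrow> ('a \<Rightarrow> 'a \<Rightarrow> bool) \<Rightarrow> nat \<Rightarrow> bool" where
  "degenerate V E k \<longleftrightarrow>
     (\<forall>S F. subgraph S F V E \<and> S \<noteq> {} \<longrightarrow> (\<exists>v\<in>S. degree F v \<le> k))"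

definition max_degree :: "'a set \<Rightarrow> ('a \<Rightarrow> 'a \<Rightarrow> bool) \<Rightarrow> nat \<Rightarrow> bool" where
  "max_degree V E D \<longleftrightarrow> (\<forall>v\<in>V. degree E v \<le> D) \<and> (\<exists>v\<in>V. degree E v = D)"

definition graph_square :: "('a \<Rightarrow> 'a \<Rightarrow> bool) \<Rightarrow> 'a \<Rightarrow> 'a \<Rightarrow> bool" where
  "graph_square E u v \<longleftrightarrow> u \<noteq> v \<and> (E u v \<or> (\<exists>w. E u w \<and> E w v))"

end

theory Submission
  imports Defs "HOL-Library.Countable"
begin

definition img :: "('a \<Rightarrow> 'b) \<Rightarrow> ('a \<Rightarrow> 'a \<Rightarrow> bool) \<Rightarrow> 'b \<Rightarrow> 'b \<Rightarrow> bool" where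
  "img f E x y = (\<exists>a b. x = f a \<and> y = f b \<and> E a b)"

lemma img_app: "inj f \<Longrightarrow> img f E (f a) (f b) = E a b"
  by (auto simp: img_def inj_eq)

lemma degree_img: assumes "inj f" shows "degree (img f E) (f a) = degree E a"
proof -
  have "{y. img f E (f a) y} = f ` {b. E a b}"
    using assms by (auto simp: img_def inj_eq)
  moreover have "inj_on f {b. E a b}" using assms by (metis inj_on_subset subset_UNIV)
  ultimately show ?thesis by (simp add: degree_def card_image)
qed

lemma simple_img: "inj f \<Longrightarrow> simple_graph V E \<Longrightarrow> simple_graph (f`V) (img f E)"
  unfolding simple_graph_def img_def by (auto simp: inj_eq)

lemma maxdeg_img: assumes "inj f" "simple_graph V E" "max_degree V E D"
  shows "max_degree (f`V) (img f E) D"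
  using assms unfolding max_degree_def by (auto simp: degree_img)

lemma degen_img_A: assumes "inj f" "simple_graph V E" "degenerate V E k"
  shows "degenerate (f`V) (img f E) k"
  unfolding degenerate_def
proof (intro allI impI)
  fix S' F' assume h: "subgraph S' F' (f ` V) (img f E) \<and> S' \<noteq> {}"
  define S where "S = {a\<in>V. f a \<in> S'}"
  define F where "F a b = F' (f a) (f b)" for a b
  have EV: "E a b \<Longrightarrow> a \<in> V \<and> b \<in> V" for a b using assms(2) by (auto simp: simple_graph_def)
  have "subgraph S F V E"
    unfolding subgraph_def
  proof (intro conjI allI impI)
    show "S \<subseteq> V" unfolding S_def by blast
  next
    fix a b assume "F a b"
    then have "F' (f a) (f b)" unfolding F_def .
    then have 1: "img f E (f a) (f b)" "f a \<in> S'" "f b \<in> S'" using h unfolding subgraph_def by blast+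
    then have "E a b" using img_app[OF assms(1)] by metis
    then show "E a b" "a \<in> S" "b \<in> S" using EV 1 unfolding S_def by auto
  next
    fix a b assume "F a b" then show "F b a" using h unfolding F_def subgraph_def by blast
  qed
  moreover have "S \<noteq> {}" using h unfolding S_def subgraph_def by blast
  ultimately obtain v where v: "v \<in> S" "degree F v \<le> k"
    using assms(3) unfolding degenerate_def by blast
  have "{y. F' (f v) y} = f ` {b. F v b}"
    using h unfolding F_def subgraph_def by blast
  moreover have "inj_on f {b. F v b}" using assms by (metis inj_on_subset subset_UNIV)
  ultimately have "degree F' (f v) = degree F v" by (simp add: degree_def card_image)
  then show "\<exists>v\<in>S'. degree F' v \<le> k" using v S_def by (metis (mono_tags, lifting) mem_Collect_eq)
qed

lemma degen_img_B: assumes "inj f" "degenerate (f`V) (img f E) k"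
  shows "degenerate V E k"
  unfolding degenerate_def
proof (intro allI impI)
  fix S F assume h: "subgraph S F V E \<and> S \<noteq> {}"
  have "subgraph (f`S) (img f F) (f`V) (img f E)"
    using h unfolding subgraph_def img_def by blast
  moreover have "f`S \<noteq> {}" using h by blast
  ultimately obtain x where x: "x \<in> f`S" "degree (img f F) x \<le> k"
    using assms(2) unfolding degenerate_def by blast
  then obtain v where "v \<in> S" "x = f v" by blast
  then show "\<exists>v\<in>S. degree F v \<le> k" using x degree_img[OF assms(1)] by auto
qed

lemma gs_img: assumes "inj f" shows "graph_square (img f E) = img f (graph_square E)"
  by (intro ext) (auto simp: graph_square_def img_def inj_eq[OF assms])

datatype vtx = L bool nat | R bool nat | M bool nat nat | W nat nat nat
instance vtx :: countable by countable_datatype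

fun adj :: "nat \<Rightarrow> vtx \<Rightarrow> vtx \<Rightarrow> bool" where
  "adj n (L c i) v = (i<n \<and> (v = R c i \<or> (\<exists>j<n. v = M c i j)))"
| "adj n (R c j) v = (j<n \<and> (v = L c j \<or> (\<exists>i<n. v = M c i j)))"
| "adj n (M True i j) v = (i<n \<and> j<n \<and> (v = L True i \<or> v = R True j \<or>
      (\<exists>k<n. k\<noteq>j \<and> v = W i j k)))"
| "adj n (M False i j) v = (i<n \<and> j<n \<and> (v = L False i \<or> v = R False j \<or>
      (\<exists>k<n. k\<noteq>j \<and> v = W i k j)))"
| "adj n (W i j k) v = (i<n \<and> j<n \<and> k<n \<and> j\<noteq>k \<and> (v = M True i j \<or> v = M False i k))"

fun valid :: "nat \<Rightarrow> vtx \<Rightarrow> bool" where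
  "valid n (L c i) = (i<n)"
| "valid n (R c i) = (i<n)"
| "valid n (M c i j) = (i<n \<and> j<n)"
| "valid n (W i j k) = (i<n \<and> j<n \<and> k<n \<and> j\<noteq>k)"

lemma adj_M[simp]: "adj n (M c i j) v = (i<n \<and> j<n \<and> (v = L c i \<or> v = R c j \<or>
      (\<exists>k<n. k\<noteq>j \<and> (c \<longrightarrow> v = W i j k) \<and> (\<not>c \<longrightarrow> v = W i k j))))"
  by (cases c) auto

declare adj.simps(3,4)[simp del]

definition VV :: "nat \<Rightarrow> vtx set" where "VV n = {v. valid n v}"

lemma finite_VV: "finite (VV n)"
proof -
  have "VV n \<subseteq> (\<lambda>(c,i). L c i)`(UNIV \<times> {..<n}) \<union> (\<lambda>(c,i). R c i)`(UNIV \<times> {..<n})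
     \<union> (\<lambda>(c,i,j). M c i j)`(UNIV \<times> {..<n} \<times> {..<n}) \<union> (\<lambda>(i,j,k). W i j k)`({..<n} \<times> {..<n} \<times> {..<n})"
  proof
    fix v assume "v \<in> VV n" then show "v \<in> (\<lambda>(c,i). L c i)`(UNIV \<times> {..<n}) \<union> (\<lambda>(c,i). R c i)`(UNIV \<times> {..<n})
     \<union> (\<lambda>(c,i,j). M c i j)`(UNIV \<times> {..<n} \<times> {..<n}) \<union> (\<lambda>(i,j,k). W i j k)`({..<n} \<times> {..<n} \<times> {..<n})"
      by (cases v) (auto simp: VV_def image_iff)
  qed
  moreover have "finite ((\<lambda>(c,i). L c i)`(UNIV \<times> {..<n}) \<union> (\<lambda>(c,i). R c i)`(UNIV \<times> {..<n})
     \<union> (\<lambda>(c,i,j). M c i j)`(UNIV \<times> {..<n} \<times> {..<n}) \<union> (\<lambda>(i,j,k). W i j k)`({..<n} \<times> {..<n} \<times> {..<n}))"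
    by simp
  ultimately show ?thesis by (rule finite_subset)
qed

lemma adj_sym: "adj n u v \<Longrightarrow> adj n v u"
  by (cases u; cases v) auto

lemma adj_valid: "adj n u v \<Longrightarrow> valid n u"
  by (cases u) auto

lemma adj_irrefl: "adj n u v \<Longrightarrow> u \<noteq> v"
  by (cases u; cases v) auto

lemma simple: "simple_graph (VV n) (adj n)"
  unfolding simple_graph_def VV_def
  using finite_VV adj_sym adj_valid adj_irrefl unfolding VV_def by blast

lemma sub_nb: "subgraph S F V E \<Longrightarrow> F v w \<Longrightarrow> E v w \<and> w \<in> S"
  unfolding subgraph_def by blast

lemma card2: "A \<subseteq> {a, b} \<Longrightarrow> card A \<le> 2"
proof -
  assume "A \<subseteq> {a, b}"
  then have "card A \<le> card {a, b}" by (intro card_mono) auto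
  also have "\<dots> \<le> 2" by (simp add: card_insert_if)
  finally show ?thesis .
qed

lemma degen2: "degenerate (VV n) (adj n) 2"
  unfolding degenerate_def
proof (intro allI impI)
  fix S F assume h: "subgraph S F (VV n) (adj n) \<and> S \<noteq> {}"
  have nb: "F v w \<Longrightarrow> adj n v w \<and> w \<in> S" for v w using h unfolding subgraph_def by blast
  show "\<exists>v\<in>S. degree F v \<le> 2"
  proof (cases "\<exists>i j k. W i j k \<in> S")
    case True
    then obtain i j k where v: "W i j k \<in> S" by blast
    have "{w. F (W i j k) w} \<subseteq> {M True i j, M False i k}"
    proof
      fix w assume "w \<in> {w. F (W i j k) w}"
      then have "adj n (W i j k) w" using nb by blast
      then show "w \<in> {M True i j, M False i k}" by simp
    qed
    then have "degree F (W i j k) \<le> 2" unfolding degree_def by (rule card2)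
    then show ?thesis using v by blast
  next
    case nW: False
    show ?thesis
    proof (cases "\<exists>c i j. M c i j \<in> S")
      case True
      then obtain c i j where v: "M c i j \<in> S" by blast
      have "{w. F (M c i j) w} \<subseteq> {L c i, R c j}"
      proof
        fix w assume "w \<in> {w. F (M c i j) w}"
        then have "adj n (M c i j) w" "w \<in> S" using nb by blast+
        then show "w \<in> {L c i, R c j}" using nW by auto
      qed
      then have "degree F (M c i j) \<le> 2" unfolding degree_def by (rule card2)
      then show ?thesis using v by blast
    next
      case nM: False
      obtain v where v: "v \<in> S" using h by blast
      have "degree F v \<le> 2"
      proof (cases v)
        case (L c i)
        have "{w. F v w} \<subseteq> {R c i, R c i}"
        proof
          fix w assume "w \<in> {w. F v w}"
          then have "adj n v w" "w \<in> S" using nb by blast+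
          then show "w \<in> {R c i, R c i}" using nM L by auto
        qed
        then show ?thesis unfolding degree_def by (rule card2)
      next
        case (R c i)
        have "{w. F v w} \<subseteq> {L c i, L c i}"
        proof
          fix w assume "w \<in> {w. F v w}"
          then have "adj n v w" "w \<in> S" using nb by blast+
          then show "w \<in> {L c i, L c i}" using nM R by auto
        qed
        then show ?thesis unfolding degree_def by (rule card2)
      next
        case (M c i j) then show ?thesis using nM v by blast
      next
        case (W i j k) then show ?thesis using nW v by blast
      qed
      then show ?thesis using v by blast
    qed
  qed
qed

lemma card_ins_le: "finite A \<Longrightarrow> card (insert a A) \<le> Suc (card A)"
  by (simp add: card_insert_if)

lemma maxdeg: assumes "n \<ge> 1" shows "max_degree (VV n) (adj n) (Suc n)"
  unfolding max_degree_def
proof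
  show "\<forall>v\<in>VV n. degree (adj n) v \<le> Suc n"
  proof
    fix v assume "v \<in> VV n"
    then have vv: "valid n v" by (simp add: VV_def)
    show "degree (adj n) v \<le> Suc n"
    proof (cases v)
      case (L c i)
      have "{w. adj n v w} \<subseteq> insert (R c i) (M c i ` {..<n})" using L by auto
      then have "card {w. adj n v w} \<le> card (insert (R c i) (M c i ` {..<n}))"
        by (intro card_mono) auto
      also have "\<dots> \<le> Suc (card (M c i ` {..<n}))" by (intro card_ins_le) auto
      also have "\<dots> \<le> Suc n" using card_image_le[of "{..<n}" "M c i"] by simp
      finally show ?thesis unfolding degree_def .
    next
      case (R c j)
      have "{w. adj n v w} \<subseteq> insert (L c j) ((\<lambda>i. M c i j) ` {..<n})" using R by auto
      then have "card {w. adj n v w} \<le> card (insert (L c j) ((\<lambda>i. M c i j) ` {..<n}))"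
        by (intro card_mono) auto
      also have "\<dots> \<le> Suc (card ((\<lambda>i. M c i j) ` {..<n}))" by (intro card_ins_le) auto
      also have "\<dots> \<le> Suc n" using card_image_le[of "{..<n}" "\<lambda>i. M c i j"] by simp
      finally show ?thesis unfolding degree_def .
    next
      case (M c i j)
      define g where "g k = (if c then W i j k else W i k j)" for k
      have jn: "j < n" using vv M by simp
      have "{w. adj n v w} \<subseteq> insert (L c i) (insert (R c j) (g ` ({..<n} - {j})))"
        using M by (auto simp: g_def)
      then have "card {w. adj n v w} \<le> card (insert (L c i) (insert (R c j) (g ` ({..<n} - {j}))))"
        by (intro card_mono) auto
      also have "\<dots> \<le> Suc (card (insert (R c j) (g ` ({..<n} - {j}))))" by (intro card_ins_le) auto
      also have "\<dots> \<le> Suc (Suc (card (g ` ({..<n} - {j}))))" using card_ins_le[of "g ` ({..<n} - {j})" "R c j"] by simp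
      also have "\<dots> \<le> Suc (Suc (card ({..<n} - {j})))" using card_image_le[of "{..<n} - {j}" g] by simp
      also have "\<dots> = Suc n" using jn by simp
      finally show ?thesis unfolding degree_def .
    next
      case (W i j k)
      have "{w. adj n v w} \<subseteq> {M True i j, M False i k}" using W by auto
      then have "card {w. adj n v w} \<le> 2" by (rule card2)
      then show ?thesis using assms unfolding degree_def by simp
    qed
  qed
next
  have "{w. adj n (L True 0) w} = insert (R True 0) (M True 0 ` {..<n})" using assms by auto
  moreover have "card (insert (R True 0) (M True 0 ` {..<n})) = Suc n"
  proof -
    have "R True 0 \<notin> M True 0 ` {..<n}" by auto
    moreover have "card (M True 0 ` {..<n}) = n" by (simp add: card_image inj_on_def)
    ultimately show ?thesis by simp
  qed
  moreover have "L True 0 \<in> VV n" using assms by (simp add: VV_def)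
  ultimately show "\<exists>v\<in>VV n. degree (adj n) v = Suc n" unfolding degree_def by metis
qed

fun isW :: "vtx \<Rightarrow> bool" where
  "isW (W i j k) = True" | "isW _ = False"

lemma gs1: "adj n v w \<Longrightarrow> graph_square (adj n) v w"
  unfolding graph_square_def using adj_irrefl by blast

lemma gs2: "adj n v x \<Longrightarrow> adj n x w \<Longrightarrow> v \<noteq> w \<Longrightarrow> graph_square (adj n) v w"
  unfolding graph_square_def by blast

lemma card3: assumes "finite A" "finite B" "finite C" "A \<inter> B = {}" "A \<inter> C = {}" "B \<inter> C = {}"
  shows "card (A \<union> B \<union> C) = card A + card B + card C"
  using assms by (simp add: card_Un_disjoint Int_Un_distrib2)

lemma card4: assumes "finite A" "finite B" "finite C" "finite D" "A \<inter> B = {}" "A \<inter> C = {}" "B \<inter> C = {}"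
   "A \<inter> D = {}" "B \<inter> D = {}" "C \<inter> D = {}"
  shows "card (A \<union> B \<union> C \<union> D) = card A + card B + card C + card D"
  using assms by (simp add: card_Un_disjoint Int_Un_distrib2)

lemma sq_lb:
  assumes n: "n \<ge> 1"
    and SD: "S = {v \<in> VV n. \<not> isW v}"
    and FD: "\<And>u v. F u v = (graph_square (adj n) u v \<and> u \<in> S \<and> v \<in> S)"
    and v: "v \<in> S"
  shows "3 * n - 1 \<le> card {w. F v w}"
proof -
  have fin: "finite {w. F v w}"
    by (rule finite_subset[OF _ finite_VV[of n]]) (auto simp: FD SD)
  have inS: "valid n w \<Longrightarrow> \<not> isW w \<Longrightarrow> w \<in> S" for w by (simp add: SD VV_def)
  have vS: "valid n v" "\<not> isW v" using v by (auto simp: SD VV_def)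
  obtain T where T: "T \<subseteq> {w. F v w}" "card T = 3 * n - 1"
  proof (cases v)
    case (L c i)
    have i: "i < n" using vS L by simp
    let ?A = "R c ` {..<n}" let ?B = "M c i ` {..<n}" let ?C = "(\<lambda>k. M c k i) ` ({..<n} - {i})"
    have "card (?A \<union> ?B \<union> ?C) = n + n + (n - 1)"
      using i by (subst card3) (auto simp: card_image inj_on_def)
    moreover have "?A \<union> ?B \<union> ?C \<subseteq> {w. F v w}"
    proof -
      have "?A \<subseteq> {w. F v w}"
      proof
        fix w assume "w \<in> ?A" then obtain j where j: "j < n" "w = R c j" by blast
        have g: "graph_square (adj n) v w" using gs2[of n v "(M c i j)" w] i j L by auto
        show "w \<in> {w. F v w}" using g j v L inS by (auto simp: FD)
      qed
      moreover have "?B \<subseteq> {w. F v w}" using gs1 i v L inS by (auto simp: FD)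
      moreover have "?C \<subseteq> {w. F v w}"
      proof
        fix w assume "w \<in> ?C" then obtain k where k: "k < n" "k \<noteq> i" "w = M c k i" by blast
        have g: "graph_square (adj n) v w" using gs2[of n v "(R c i)" w] i k L by auto
        show "w \<in> {w. F v w}" using g k v L inS i by (auto simp: FD)
      qed
      ultimately show ?thesis by blast
    qed
    ultimately have "card (?A \<union> ?B \<union> ?C) = 3 * n - 1 \<and> ?A \<union> ?B \<union> ?C \<subseteq> {w. F v w}" using n by simp
    then show ?thesis using that by blast
  next
    case (R c j)
    have j: "j < n" using vS R by simp
    let ?A = "L c ` {..<n}" let ?B = "(\<lambda>i. M c i j) ` {..<n}" let ?C = "(\<lambda>k. M c j k) ` ({..<n} - {j})"
    have "card (?A \<union> ?B \<union> ?C) = n + n + (n - 1)"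
      using j by (subst card3) (auto simp: card_image inj_on_def)
    moreover have "?A \<union> ?B \<union> ?C \<subseteq> {w. F v w}"
    proof -
      have "?A \<subseteq> {w. F v w}"
      proof
        fix w assume "w \<in> ?A" then obtain i where i: "i < n" "w = L c i" by blast
        have g: "graph_square (adj n) v w" using gs2[of n v "(M c i j)" w] i j R by auto
        show "w \<in> {w. F v w}" using g i v R inS by (auto simp: FD)
      qed
      moreover have "?B \<subseteq> {w. F v w}" using gs1 j v R inS by (auto simp: FD)
      moreover have "?C \<subseteq> {w. F v w}"
      proof
        fix w assume "w \<in> ?C" then obtain k where k: "k < n" "k \<noteq> j" "w = M c j k" by blast
        have g: "graph_square (adj n) v w" using gs2[of n v "(L c j)" w] j k R by auto
        show "w \<in> {w. F v w}" using g k v R inS j by (auto simp: FD)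
      qed
      ultimately show ?thesis by blast
    qed
    ultimately have "card (?A \<union> ?B \<union> ?C) = 3 * n - 1 \<and> ?A \<union> ?B \<union> ?C \<subseteq> {w. F v w}" using n by simp
    then show ?thesis using that by blast
  next
    case (M c i j)
    have ij: "i < n" "j < n" using vS M by auto
    let ?A = "{L c i, R c j}" let ?B = "M c i ` ({..<n} - {j})" let ?C = "(\<lambda>k. M c k j) ` ({..<n} - {i})"
    let ?D = "M (\<not>c) i ` ({..<n} - {j})"
    have "card (?A \<union> ?B \<union> ?C \<union> ?D) = 2 + (n - 1) + (n - 1) + (n - 1)"
      using ij by (subst card4) (auto simp: card_image inj_on_def)
    moreover have "?A \<union> ?B \<union> ?C \<union> ?D \<subseteq> {w. F v w}"
    proof -
      have "?A \<subseteq> {w. F v w}" using gs1 ij v M inS by (auto simp: FD)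
      moreover have "?B \<subseteq> {w. F v w}"
      proof
        fix w assume "w \<in> ?B" then obtain k where k: "k < n" "k \<noteq> j" "w = M c i k" by blast
        have g: "graph_square (adj n) v w" using gs2[of n v "(L c i)" w] ij k M by auto
        show "w \<in> {w. F v w}" using g k v M inS ij by (auto simp: FD)
      qed
      moreover have "?C \<subseteq> {w. F v w}"
      proof
        fix w assume "w \<in> ?C" then obtain k where k: "k < n" "k \<noteq> i" "w = M c k j" by blast
        have g: "graph_square (adj n) v w" using gs2[of n v "(R c j)" w] ij k M by auto
        show "w \<in> {w. F v w}" using g k v M inS ij by (auto simp: FD)
      qed
      moreover have "?D \<subseteq> {w. F v w}"
      proof
        fix w assume "w \<in> ?D" then obtain k where k: "k < n" "k \<noteq> j" "w = M (\<not>c) i k" by blast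
        define x where "x = (if c then W i j k else W i k j)"
        have g: "graph_square (adj n) v w" using gs2[of n v "x" w] ij k M unfolding x_def by auto
        show "w \<in> {w. F v w}" using g k v M inS ij by (auto simp: FD)
      qed
      ultimately show ?thesis by blast
    qed
    ultimately have "card (?A \<union> ?B \<union> ?C \<union> ?D) = 3 * n - 1 \<and> ?A \<union> ?B \<union> ?C \<union> ?D \<subseteq> {w. F v w}" using n by simp
    then show ?thesis using that by blast
  next
    case (W i j k) then show ?thesis using vS by simp
  qed
  then show ?thesis using card_mono[OF fin T(1)] by simp
qed

lemma nondeg: assumes n: "n \<ge> 1"
  shows "\<not> degenerate (VV n) (graph_square (adj n)) (3 * Suc n - 5)"
proof
  assume dg: "degenerate (VV n) (graph_square (adj n)) (3 * Suc n - 5)"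
  define S where "S = {v \<in> VV n. \<not> isW v}"
  define F where "F u v = (graph_square (adj n) u v \<and> u \<in> S \<and> v \<in> S)" for u v
  have "subgraph S F (VV n) (graph_square (adj n))"
    unfolding subgraph_def F_def S_def graph_square_def using adj_sym by blast
  moreover have "L True 0 \<in> S" using n by (simp add: S_def VV_def)
  ultimately obtain v where v: "v \<in> S" "degree F v \<le> 3 * Suc n - 5"
    using dg unfolding degenerate_def by blast
  have "3 * n - 1 \<le> card {w. F v w}"
    by (rule sq_lb[OF n S_def _ v(1)]) (simp add: F_def)
  then show False using v(2) n unfolding degree_def by simp
qed

theorem mainTheorem11:
  fixes D :: nat
  assumes "D \<ge> 2"
  shows "\<exists>(V :: nat set) E. simple_graph V E \<and> degenerate V E 2 \<and> max_degree V E D \<and>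
           \<not> degenerate V (graph_square E) (3 * D - 5)"
proof -
  define n where "n = D - 1"
  have n: "n \<ge> 1" "D = Suc n" using assms by (auto simp: n_def)
  have inj: "inj (to_nat :: vtx \<Rightarrow> nat)" by simp
  let ?V = "to_nat ` VV n" and ?E = "img to_nat (adj n)"
  have "simple_graph ?V ?E" by (rule simple_img[OF inj simple])
  moreover have "degenerate ?V ?E 2" by (rule degen_img_A[OF inj simple degen2])
  moreover have "max_degree ?V ?E D" using maxdeg_img[OF inj simple maxdeg[OF n(1)]] n(2) by simp
  moreover have "\<not> degenerate ?V (graph_square ?E) (3 * D - 5)"
  proof
    assume "degenerate ?V (graph_square ?E) (3 * D - 5)"
    then have "degenerate ?V (img to_nat (graph_square (adj n))) (3 * D - 5)"
      by (simp add: gs_img[OF inj])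
    then have "degenerate (VV n) (graph_square (adj n)) (3 * D - 5)" by (rule degen_img_B[OF inj])
    then show False using nondeg[OF n(1)] n(2) by simp
  qed
  ultimately show ?thesis by blast
qed

end
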